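(* Let $1\le q<p<\infty$ and $z>m_{p,q}$ with $z^*=(z^q,1)\in\mathcal J_p$. Let $D_z=\{(t_1,t_2)\in\mathbb R^2:t_1,t_2>0,\ t_1^{1/q}t_2^{-1/p}>z\}$ and $\mathscr D_z=\{(t_1,t_2,t_3)\in\mathbb R^3:t_1,t_2>0,\ t_3\in(0,1],\ t_3t_1^{1/q}t_2^{-1/p}>z\}$. Then (i) $z^*$ is the unique point at which $\Lambda_p^*$ attains its infimum over $\overline{D_z}$; (ii) $z^{**}=(z^q,1,1)$ is the unique point at which $\mathcal I_{\mathscr S}(t)=\Lambda_p^*(t_1,t_2)-\log t_3$ attains its infimum over $\overline{\mathscr D_z}$.
   Context: Let $f_p(x)=\frac{1}{2p^{1/p}\Gamma(1+1/p)}e^{-|x|^p/p}$, $m_{p,q}=(\int_{\mathbb R}|x|^qf_p(x)dx)^{1/q}$. For $\tau\in\mathbb R^2$, $\Lambda_p(\tau)=\log\int_{\mathbb R}e^{\tau_1|y|^q+\tau_2|y|^p}f_p(y)\,dy$, finite exactly on $\mathcal D_p=\mathbb R\times(-\infty,1/p)$; $\Lambda_p^*(x)=\sup_{\tau\in\mathbb R^2}(\langle x,\tau\rangle-\Lambda_p(\tau))$ (with values in $[0,\infty]$). $\mathcal J_p$ is the set of $x\in\mathbb R^2$ for which there exists (a unique) $\tau(x)\in\mathcal D_p$ with $\nabla_\tau\Lambda_p(\tau(x))=x$. $\overline{A}$ denotes closure; $\log t_3=-\infty$ convention is not needed as $\mathcal I_{\mathscr S}$ is considered for $t_3>0$ (value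 $+\infty$ if $t_3\le0$). *)

theory Defs
  imports "HOL-Analysis.Analysis"
begin

definition f_p :: "real \<Rightarrow> real \<Rightarrow> real" where
  "f_p p x = exp (- (\<bar>x\<bar> powr p) / p) / (2 * p powr (1/p) * Gamma (1 + 1/p))"

definition m_pq :: "real \<Rightarrow> real \<Rightarrow> real" where
  "m_pq p q = (LINT x|lborel. \<bar>x\<bar> powr q * f_p p x) powr (1/q)"

definition mgf_integrand :: "real \<Rightarrow> real \<Rightarrow> real \<times> real \<Rightarrow> real \<Rightarrow> real" where
  "mgf_integrand p q \<tau> y = exp (fst \<tau> * \<bar>y\<bar> powr q + snd \<tau> * \<bar>y\<bar> powr p) * f_p p y"

definition Lambda_p :: "real \<Rightarrow> real \<Rightarrow> real \<times> real \<Rightarrow> ereal" where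
  "Lambda_p p q \<tau> = (if integrable lborel (mgf_integrand p q \<tau>)
      then ereal (ln (LINT y|lborel. mgf_integrand p q \<tau> y)) else \<infinity>)"

definition D_p :: "real \<Rightarrow> (real \<times> real) set" where
  "D_p p = {\<tau>. snd \<tau> < 1/p}"

definition Lambda_star :: "real \<Rightarrow> real \<Rightarrow> real \<times> real \<Rightarrow> ereal" where
  "Lambda_star p q x = (SUP \<tau>\<in>UNIV. ereal (x \<bullet> \<tau>) - Lambda_p p q \<tau>)"

definition J_p :: "real \<Rightarrow> real \<Rightarrow> (real \<times> real) set" where
  "J_p p q = {x. \<exists>\<tau>\<in>D_p p.
      ((\<lambda>\<sigma>. ln (LINT y|lborel. mgf_integrand p q \<sigma> y)) has_derivative (\<lambda>h. x \<bullet> h)) (at \<tau>)}"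

definition D_z :: "real \<Rightarrow> real \<Rightarrow> real \<Rightarrow> (real \<times> real) set" where
  "D_z p q z = {(t1, t2). t1 > 0 \<and> t2 > 0 \<and> t1 powr (1/q) * t2 powr (-1/p) > z}"

definition DD_z :: "real \<Rightarrow> real \<Rightarrow> real \<Rightarrow> (real \<times> real \<times> real) set" where
  "DD_z p q z = {(t1, t2, t3). t1 > 0 \<and> t2 > 0 \<and> 0 < t3 \<and> t3 \<le> 1 \<and>
      t3 * t1 powr (1/q) * t2 powr (-1/p) > z}"

definition I_S :: "real \<Rightarrow> real \<Rightarrow> real \<times> real \<times> real \<Rightarrow> ereal" where
  "I_S p q t = (case t of (t1, t2, t3) \<Rightarrow>
      if t3 \<le> 0 then \<infinity> else Lambda_star p q (t1, t2) - ereal (ln t3))"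

end

theory Submission
  imports Defs
begin


definition Cn :: "real \<Rightarrow> real" where "Cn p = 2 * p powr (1/p) * Gamma (1 + 1/p)"

lemma Cn_pos: "p > 0 \<Longrightarrow> Cn p > 0"
  unfolding Cn_def by (intro mult_pos_pos Gamma_real_pos) (auto intro: add_pos_pos)

lemma f_p_alt: "f_p p x = exp (- (\<bar>x\<bar> powr p) / p) / Cn p"
  unfolding f_p_def Cn_def by simp

lemma f_p_pos: "p > 0 \<Longrightarrow> f_p p x > 0"
  unfolding f_p_alt using Cn_pos by simp

lemma mgf_pos: "p > 0 \<Longrightarrow> mgf_integrand p q \<tau> y > 0"
  unfolding mgf_integrand_def using f_p_pos by simp

lemma mgf_meas[measurable]: "mgf_integrand p q \<tau> \<in> borel_measurable borel"
  unfolding mgf_integrand_def f_p_def by measurable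

lemma mgf_alt: "mgf_integrand p q \<tau> y = exp (fst \<tau> * \<bar>y\<bar> powr q + (snd \<tau> - 1/p) * \<bar>y\<bar> powr p) / Cn p"
  unfolding mgf_integrand_def f_p_alt
  by (simp add: exp_add[symmetric] exp_diff algebra_simps diff_divide_distrib)

lemma mgf_scale:
  assumes "c > 0"
  shows "mgf_integrand p q (fst \<tau> * c powr q, (snd \<tau> - 1/p) * c powr p + 1/p) y = mgf_integrand p q \<tau> (c*y)"
  unfolding mgf_alt using assms
  by (simp add: abs_mult powr_mult algebra_simps)

lemma mgf_scale_int:
  assumes "c > 0"
  shows "integrable lborel (mgf_integrand p q (fst \<tau> * c powr q, (snd \<tau> - 1/p) * c powr p + 1/p))
           \<longleftrightarrow> integrable lborel (mgf_integrand p q \<tau>)"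
    and "(LINT y|lborel. mgf_integrand p q (fst \<tau> * c powr q, (snd \<tau> - 1/p) * c powr p + 1/p) y)
           = (LINT y|lborel. mgf_integrand p q \<tau> y) / c"
proof -
  have e: "mgf_integrand p q (fst \<tau> * c powr q, (snd \<tau> - 1/p) * c powr p + 1/p) = (\<lambda>y. mgf_integrand p q \<tau> (0 + c*y))"
    using mgf_scale[OF assms] by auto
  show "integrable lborel (mgf_integrand p q (fst \<tau> * c powr q, (snd \<tau> - 1/p) * c powr p + 1/p))
           \<longleftrightarrow> integrable lborel (mgf_integrand p q \<tau>)"
    unfolding e using lborel_integrable_real_affine_iff[of c "mgf_integrand p q \<tau>" 0] assms by simp
  show "(LINT y|lborel. mgf_integrand p q (fst \<tau> * c powr q, (snd \<tau> - 1/p) * c powr p + 1/p) y)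
           = (LINT y|lborel. mgf_integrand p q \<tau> y) / c"
    unfolding e using lborel_integral_real_affine[of c "mgf_integrand p q \<tau>" 0] assms by simp
qed

lemma mgf_mono_integrable:
  assumes "p > 0" "integrable lborel (mgf_integrand p q \<sigma>)" "fst \<tau> \<le> fst \<sigma>" "snd \<tau> \<le> snd \<sigma>"
  shows "integrable lborel (mgf_integrand p q \<tau>)"
proof (rule Bochner_Integration.integrable_bound[OF assms(2)])
  show "AE x in lborel. norm (mgf_integrand p q \<tau> x) \<le> norm (mgf_integrand p q \<sigma> x)"
  proof (rule AE_I2)
    fix x
    have "fst \<tau> * \<bar>x\<bar> powr q + snd \<tau> * \<bar>x\<bar> powr p \<le> fst \<sigma> * \<bar>x\<bar> powr q + snd \<sigma> * \<bar>x\<bar> powr p"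
      using assms(3,4) by (intro add_mono mult_right_mono) auto
    then show "norm (mgf_integrand p q \<tau> x) \<le> norm (mgf_integrand p q \<sigma> x)"
      using mgf_pos[OF assms(1)] unfolding mgf_integrand_def
      by (auto simp: abs_mult less_imp_le[OF f_p_pos[OF assms(1)]] intro!: mult_right_mono)
  qed
qed simp



lemma Gamma_abs_Ioi:
  assumes "a > (0::real)"
  shows "(\<lambda>t. t powr (a - 1) / exp t) absolutely_integrable_on {0<..}
         \<and> integral {0<..} (\<lambda>t. t powr (a - 1) / exp t) = Gamma a"
proof -
  have "((\<lambda>t. t powr (a - 1) / exp t) has_integral Gamma a) {0..}"
    by (rule Gamma_integral_real[OF assms])
  hence "((\<lambda>t. if t \<in> {0<..} then t powr (a - 1) / exp t else 0) has_integral Gamma a) {0..}"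
    by (rule has_integral_spike [of "{0}", rotated 2]) auto
  hence h: "((\<lambda>t. t powr (a - 1) / exp t) has_integral Gamma a) {0<..}"
    by (subst (asm) has_integral_restrict) auto
  have "(\<lambda>t. t powr (a - 1) / exp t) absolutely_integrable_on {0<..}"
    by (rule nonnegative_absolutely_integrable_1) (use h in auto)
  with h show ?thesis by (simp add: has_integral_iff)
qed

lemma moment_pos:
  fixes p r :: real
  assumes p: "p > 0" and r: "r \<ge> 0"
  shows "(\<lambda>y. y powr r * exp (- (y powr p) / p)) absolutely_integrable_on {0<..}
         \<and> integral {0<..} (\<lambda>y. y powr r * exp (- (y powr p) / p)) = p powr ((r+1)/p - 1) * Gamma ((r+1)/p)"
proof -
  define a where "a = (r+1)/p"
  have a: "a > 0" using p r by (simp add: a_def)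
  define g where "g = (\<lambda>y::real. y powr p / p)"
  define g' where "g' = (\<lambda>y::real. y powr (p - 1))"
  define f where "f = (\<lambda>t::real. t powr (a - 1) / exp t)"
  have der: "(g has_field_derivative g' y) (at y within {0<..})" if "y \<in> {0<..}" for y
    using that p unfolding g_def g'_def
    by (auto intro!: derivative_eq_intros simp: powr_diff field_simps)
  have inj: "inj_on g {0<..}"
  proof (rule inj_onI)
    fix x y :: real assume xy: "x \<in> {0<..}" "y \<in> {0<..}" "g x = g y"
    then have "x powr p = y powr p" using p unfolding g_def by simp
    then have "(x powr p) powr (1/p) = (y powr p) powr (1/p)" by simp
    then show "x = y" using p xy by (simp add: powr_powr)
  qed
  have img: "g ` {0<..} = {0<..}"
  proof (rule set_eqI, rule iffI)
    fix u assume "u \<in> g ` {0<..}" then show "u \<in> {0<..}" using p unfolding g_def by auto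
  next
    fix u :: real assume u: "u \<in> {0<..}"
    have "g ((p*u) powr (1/p)) = u" using p u unfolding g_def by (simp add: powr_powr)
    moreover have "(p*u) powr (1/p) \<in> {0<..}" using p u by simp
    ultimately show "u \<in> g ` {0<..}" by (metis image_eqI)
  qed
  have eq: "\<bar>g' y\<bar> * f (g y) = p powr (1 - a) * (y powr r * exp (- (y powr p) / p))" if "y > 0" for y
  proof -
    have "(y powr p / p) powr (a - 1) = y powr (p*(a-1)) * p powr (1 - a)"
    proof -
      have "(y powr p / p) powr (a - 1) = (y powr p) powr (a - 1) / p powr (a - 1)"
        using that p by (simp add: powr_divide)
      also have "\<dots> = y powr (p*(a-1)) * p powr (1 - a)"
        using p by (simp add: powr_powr powr_diff divide_simps powr_add[symmetric] right_diff_distrib)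
      finally show ?thesis .
    qed
    moreover have "p * (a - 1) = r + 1 - p" unfolding a_def using p by (simp add: field_simps)
    ultimately have "(y powr p / p) powr (a - 1) = y powr (r + 1 - p) * p powr (1 - a)" by simp
    moreover have "y powr (p - 1) * y powr (r + 1 - p) = y powr r"
      using that by (simp add: powr_add[symmetric])
    ultimately show ?thesis using that unfolding g'_def f_def g_def
      by (simp add: exp_minus field_simps)
  qed
  have CV: "(\<lambda>y. \<bar>g' y\<bar> * f (g y)) absolutely_integrable_on {0<..} \<and>
           integral {0<..} (\<lambda>y. \<bar>g' y\<bar> * f (g y)) = Gamma a"
    using has_absolute_integral_change_of_variables_1'[OF _ der inj, where b="Gamma a" and f=f] img
      Gamma_abs_Ioi[OF a] unfolding f_def by auto
  have "(\<lambda>y. p powr (1 - a) * (y powr r * exp (- (y powr p) / p))) absolutely_integrable_on {0<..} \<and>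
           integral {0<..} (\<lambda>y. p powr (1 - a) * (y powr r * exp (- (y powr p) / p))) = Gamma a"
  proof -
    let ?H = "\<lambda>y. p powr (1 - a) * (y powr r * exp (- (y powr p) / p))"
    have "?H absolutely_integrable_on {0<..}"
      by (rule absolutely_integrable_spike[where f="\<lambda>y. \<bar>g' y\<bar> * f (g y)" and S="{}"]) (use CV eq in auto)
    moreover have "integral {0<..} ?H = integral {0<..} (\<lambda>y. \<bar>g' y\<bar> * f (g y))"
      by (rule integral_cong) (use eq in auto)
    ultimately show ?thesis using CV by simp
  qed
  hence I: "(\<lambda>y. p powr (a - 1) * (p powr (1 - a) * (y powr r * exp (- (y powr p) / p)))) absolutely_integrable_on {0<..} \<and>
           integral {0<..} (\<lambda>y. p powr (a - 1) * (p powr (1 - a) * (y powr r * exp (- (y powr p) / p)))) = p powr (a - 1) * Gamma a"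
    using absolutely_integrable_scaleR_left[where S="{0<..}" and c="p powr (a - 1)"] by auto
  have pp: "p powr (a - 1) * p powr (1 - a) = 1" using p by (simp add: powr_add[symmetric])
  have F: "(\<lambda>y. p powr (a - 1) * (p powr (1 - a) * (y powr r * exp (- (y powr p) / p)))) = (\<lambda>y. y powr r * exp (- (y powr p) / p))"
    using pp by (simp add: mult.assoc[symmetric])
  from I[unfolded F] show ?thesis by (simp only: a_def)
qed


lemma moment_lborel:
  fixes p r :: real
  assumes p: "p > 0" and r: "r \<ge> 0"
  shows "integrable lborel (\<lambda>y. \<bar>y\<bar> powr r * exp (- (\<bar>y\<bar> powr p) / p))"
    and "(LINT y|lborel. \<bar>y\<bar> powr r * exp (- (\<bar>y\<bar> powr p) / p)) = 2 * (p powr ((r+1)/p - 1) * Gamma ((r+1)/p))"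
proof -
  let ?h = "\<lambda>y::real. y powr r * exp (- (y powr p) / p)"
  define G where "G = (\<lambda>y::real. indicator {0<..} y *\<^sub>R ?h y)"
  define K where "K = p powr ((r+1)/p - 1) * Gamma ((r+1)/p)"
  have M: "set_integrable lebesgue {0<..} ?h" "integral {0<..} ?h = K"
    using moment_pos[OF p r] unfolding K_def absolutely_integrable_on_def by auto
  have Gm: "G \<in> borel_measurable lborel" unfolding G_def by measurable
  have iG: "integrable lborel G"
    using M(1) integrable_completion[OF Gm] unfolding set_integrable_def G_def by simp
  have LG: "integral\<^sup>L lborel G = K"
    using set_lebesgue_integral_eq_integral(2)[OF M(1)] M(2) integral_completion[OF Gm]
    unfolding set_lebesgue_integral_def G_def by simp
  have iG': "integrable lborel (\<lambda>y. G (0 + (-1) * y))"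
    using lborel_integrable_real_affine_iff[of "-1" G 0] iG by simp
  have LG': "integral\<^sup>L lborel (\<lambda>y. G (0 + (-1) * y)) = K"
    using lborel_integral_real_affine[of "-1" G 0] LG by simp
  have eq: "(\<lambda>y. \<bar>y\<bar> powr r * exp (- (\<bar>y\<bar> powr p) / p)) = (\<lambda>y. G y + G (0 + (-1) * y))"
  proof
    fix y :: real
    show "\<bar>y\<bar> powr r * exp (- (\<bar>y\<bar> powr p) / p) = G y + G (0 + (-1) * y)"
      unfolding G_def by (cases "y > 0"; cases "y < 0") (auto simp: indicator_def)
  qed
  show "integrable lborel (\<lambda>y. \<bar>y\<bar> powr r * exp (- (\<bar>y\<bar> powr p) / p))"
    unfolding eq using iG iG' by simp
  show "(LINT y|lborel. \<bar>y\<bar> powr r * exp (- (\<bar>y\<bar> powr p) / p)) = 2 * (p powr ((r+1)/p - 1) * Gamma ((r+1)/p))"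
    unfolding eq using iG iG' LG LG' K_def by simp
qed



lemma Cn_alt: "p > 0 \<Longrightarrow> Cn p = 2 * (p powr ((0+1)/p - 1) * Gamma ((0+1)/p))"
proof -
  assume p: "p > 0"
  have n: "1/p \<notin> \<int>\<^sub>\<le>\<^sub>0" using p by (auto elim!: nonpos_Ints_cases) (metis divide_pos_pos less_le_not_le of_int_le_0_iff zero_less_one)
  have g: "Gamma (1 + 1/p) = (1/p) * Gamma (1/p)" using Gamma_plus1[of "1/p"] n by (simp add: add_ac)
  have e: "p powr (1/p - 1) = p powr (1/p) / p" using p by (simp add: powr_diff)
  show ?thesis unfolding Cn_def g using e by simp
qed

lemma Cn_alt2: "p > 0 \<Longrightarrow> Cn p = 2 * (p powr ((p+1)/p - 1) * Gamma ((p+1)/p))"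
  unfolding Cn_def by (simp add: add_divide_distrib)

lemma fp_int: assumes "p > 0" shows "integrable lborel (f_p p)" "(LINT y|lborel. f_p p y) = 1"
proof -
  have AE: "AE y in lborel. \<bar>y\<bar> powr 0 * exp (- (\<bar>y\<bar> powr p) / p) / Cn p = f_p p y"
    by (rule eventually_mono[OF AE_lborel_singleton[of 0]]) (simp add: f_p_alt)
  have i: "integrable lborel (\<lambda>y. \<bar>y\<bar> powr 0 * exp (- (\<bar>y\<bar> powr p) / p) / Cn p)"
    by (rule integrable_divide[OF moment_lborel(1)[OF assms order.refl]])
  show "integrable lborel (f_p p)"
    by (rule integrable_cong_AE_imp[OF i _ AE]) (unfold f_p_def, measurable)
  have "(LINT y|lborel. f_p p y) = (LINT y|lborel. \<bar>y\<bar> powr 0 * exp (- (\<bar>y\<bar> powr p) / p) / Cn p)"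
    by (rule integral_cong_AE[OF _ _ AE, symmetric]) (unfold f_p_def, measurable)+
  also have "\<dots> = (LINT y|lborel. \<bar>y\<bar> powr 0 * exp (- (\<bar>y\<bar> powr p) / p)) / Cn p"
    by (rule integral_divide_zero)
  also have "\<dots> = 1" unfolding moment_lborel(2)[OF assms order.refl] Cn_alt[OF assms] using assms Gamma_real_pos[of "1/p"] by (simp add: less_imp_neq[symmetric])
  finally show "(LINT y|lborel. f_p p y) = 1" .
qed

lemma moment_fp: assumes "p > 0" "r \<ge> 0"
  shows "integrable lborel (\<lambda>y. \<bar>y\<bar> powr r * f_p p y)"
proof -
  have "integrable lborel (\<lambda>y. \<bar>y\<bar> powr r * exp (- (\<bar>y\<bar> powr p) / p) / Cn p)"
    by (rule integrable_divide[OF moment_lborel(1)[OF assms]])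
  then show ?thesis unfolding f_p_alt by (simp only: times_divide_eq_right)
qed

lemma moment_p: assumes "p > 0" shows "(LINT y|lborel. \<bar>y\<bar> powr p * f_p p y) = 1"
proof -
  have "(LINT y|lborel. \<bar>y\<bar> powr p * f_p p y) = (LINT y|lborel. \<bar>y\<bar> powr p * exp (- (\<bar>y\<bar> powr p) / p)) / Cn p"
    unfolding f_p_alt times_divide_eq_right by (rule integral_divide_zero)
  also have "\<dots> = 1" unfolding moment_lborel(2)[OF assms less_imp_le[OF assms]] Cn_alt2[OF assms, symmetric]
    using Cn_pos[OF assms] by simp
  finally show ?thesis .
qed

lemma mgf_zero: "mgf_integrand p q (0,0) = f_p p"
  unfolding mgf_integrand_def by auto

lemma jensen:
  assumes p: "p > 0" and q: "q > 0" and i: "integrable lborel (mgf_integrand p q \<tau>)"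
  shows "(LINT y|lborel. mgf_integrand p q \<tau> y) \<ge> exp (fst \<tau> * (LINT y|lborel. \<bar>y\<bar> powr q * f_p p y) + snd \<tau>)"
proof -
  define M where "M = (LINT y|lborel. \<bar>y\<bar> powr q * f_p p y)"
  define c where "c = fst \<tau> * M + snd \<tau>"
  let ?X = "\<lambda>y. fst \<tau> * \<bar>y\<bar> powr q + snd \<tau> * \<bar>y\<bar> powr p"
  have pt: "exp c * ((1 - c) * f_p p y + fst \<tau> * (\<bar>y\<bar> powr q * f_p p y) + snd \<tau> * (\<bar>y\<bar> powr p * f_p p y)) \<le> mgf_integrand p q \<tau> y" for y
  proof -
    have "exp c * (1 + (?X y - c)) \<le> exp c * exp (?X y - c)"
      by (intro mult_left_mono) auto
    also have "\<dots> = exp (?X y)" by (simp add: exp_diff)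
    finally have "exp c * (1 + (?X y - c)) * f_p p y \<le> exp (?X y) * f_p p y"
      using f_p_pos[OF p, of y] by (intro mult_right_mono) auto
    then show ?thesis unfolding mgf_integrand_def by (simp add: algebra_simps)
  qed
  have i1: "integrable lborel (f_p p)" using fp_int[OF p] by simp
  have i2: "integrable lborel (\<lambda>y. \<bar>y\<bar> powr q * f_p p y)" using moment_fp[OF p] q by simp
  have i3: "integrable lborel (\<lambda>y. \<bar>y\<bar> powr p * f_p p y)" using moment_fp[OF p] p by simp
  have "(LINT y|lborel. exp c * ((1 - c) * f_p p y + fst \<tau> * (\<bar>y\<bar> powr q * f_p p y) + snd \<tau> * (\<bar>y\<bar> powr p * f_p p y)))
        = exp c * ((1 - c) * 1 + fst \<tau> * M + snd \<tau> * 1)"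
    using i1 i2 i3 fp_int(2)[OF p] moment_p[OF p] unfolding M_def by simp
  also have "\<dots> = exp c" unfolding c_def by simp
  finally have E: "(LINT y|lborel. exp c * ((1 - c) * f_p p y + fst \<tau> * (\<bar>y\<bar> powr q * f_p p y) + snd \<tau> * (\<bar>y\<bar> powr p * f_p p y))) = exp c" .
  have I:  "integrable lborel (\<lambda>y. exp c * ((1 - c) * f_p p y + fst \<tau> * (\<bar>y\<bar> powr q * f_p p y) + snd \<tau> * (\<bar>y\<bar> powr p * f_p p y)))"
    using i1 i2 i3 by (intro integrable_mult_right integrable_add) auto
  have "exp c \<le> (LINT y|lborel. mgf_integrand p q \<tau> y)"
    using integral_mono[OF I i pt] unfolding E .
  then show ?thesis unfolding c_def M_def .
qed



abbreviation Z where "Z p q \<sigma> \<equiv> (LINT y|lborel. mgf_integrand p q \<sigma> y)"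

locale setting =
  fixes p q z :: real and t0 :: "real \<times> real"
  assumes q1: "1 \<le> q" and qp: "q < p" and zm: "z > m_pq p q"
    and t0D: "t0 \<in> D_p p"
    and der: "((\<lambda>\<sigma>. ln (Z p q \<sigma>)) has_derivative (\<lambda>h. (z powr q, 1) \<bullet> h)) (at t0)"
begin

lemma p0: "p > 0" using q1 qp by simp
lemma q0: "q > 0" using q1 by simp

lemma dir: "((\<lambda>s. (ln (Z p q (t0 + s *\<^sub>R h)) - ln (Z p q t0)) / s) \<longlongrightarrow> (z powr q, 1) \<bullet> h) (at_right 0)"
proof -
  have d1: "((\<lambda>s::real. t0 + s *\<^sub>R h) has_derivative (\<lambda>s. s *\<^sub>R h)) (at 0 within {0<..})"
    by (auto intro!: derivative_eq_intros)
  have der': "((\<lambda>\<sigma>. ln (Z p q \<sigma>)) has_derivative (\<lambda>h. (z powr q, 1) \<bullet> h)) (at (t0 + 0 *\<^sub>R h))"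
    using der by simp
  have "((\<lambda>s. ln (Z p q (t0 + s *\<^sub>R h))) has_derivative (\<lambda>s. (z powr q, 1) \<bullet> (s *\<^sub>R h))) (at 0 within {0<..})"
    by (rule has_derivative_compose[OF d1 der'])
  then have "((\<lambda>s. ln (Z p q (t0 + s *\<^sub>R h))) has_field_derivative ((z powr q, 1) \<bullet> h)) (at 0 within {0<..})"
    by (rule has_derivative_imp_has_field_derivative) simp
  then show ?thesis unfolding has_field_derivative_iff by simp
qed

lemma Zpos: "integrable lborel (mgf_integrand p q \<sigma>) \<Longrightarrow> Z p q \<sigma> > 0"
  using jensen[OF p0 q0, of \<sigma>] by (meson exp_gt_zero less_le_trans)

lemma int_t0: "integrable lborel (mgf_integrand p q t0)"
proof (rule ccontr)
  assume ni: "\<not> integrable lborel (mgf_integrand p q t0)"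
  have "\<forall>\<^sub>F s in at_right 0. (ln (Z p q (t0 + s *\<^sub>R (1,1))) - ln (Z p q t0)) / s = 0"
  proof (rule eventually_at_rightI[of 0 1])
    fix s :: real assume "s \<in> {0<..<1}"
    then have "\<not> integrable lborel (mgf_integrand p q (t0 + s *\<^sub>R (1,1)))"
      using ni mgf_mono_integrable[OF p0, of q "t0 + s *\<^sub>R (1,1)" t0] by auto
    then show "(ln (Z p q (t0 + s *\<^sub>R (1,1))) - ln (Z p q t0)) / s = 0"
      using ni by (simp add: not_integrable_integral_eq)
  qed simp
  then have "((\<lambda>s. (ln (Z p q (t0 + s *\<^sub>R (1,1))) - ln (Z p q t0)) / s) \<longlongrightarrow> 0) (at_right 0)"
    by (rule tendsto_eventually)
  moreover have "((\<lambda>s. (ln (Z p q (t0 + s *\<^sub>R (1,1))) - ln (Z p q t0)) / s) \<longlongrightarrow> z powr q + 1) (at_right 0)"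
    using dir[of "(1,1)"] by simp
  ultimately have "z powr q + 1 = 0" using tendsto_unique[OF trivial_limit_at_right_real] by blast
  moreover have "z powr q \<ge> 0" by simp
  ultimately show False by simp
qed


lemma dir_der: "((\<lambda>s. ln (Z p q (t0 + s *\<^sub>R h))) has_field_derivative ((z powr q, 1) \<bullet> h)) (at 0 within {0<..})"
proof -
  have d1: "((\<lambda>s::real. t0 + s *\<^sub>R h) has_derivative (\<lambda>s. s *\<^sub>R h)) (at 0 within {0<..})"
    by (auto intro!: derivative_eq_intros)
  have der': "((\<lambda>\<sigma>. ln (Z p q \<sigma>)) has_derivative (\<lambda>h. (z powr q, 1) \<bullet> h)) (at (t0 + 0 *\<^sub>R h))"
    using der by simp
  have "((\<lambda>s. ln (Z p q (t0 + s *\<^sub>R h))) has_derivative (\<lambda>s. (z powr q, 1) \<bullet> (s *\<^sub>R h))) (at 0 within {0<..})"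
    by (rule has_derivative_compose[OF d1 der'])
  then show ?thesis
    by (rule has_derivative_imp_has_field_derivative) simp
qed

lemma Wineq:
  assumes i: "integrable lborel (mgf_integrand p q \<tau>)"
  shows "(z powr q, 1) \<bullet> \<tau> - ln (Z p q \<tau>) \<le> (z powr q, 1) \<bullet> t0 - ln (Z p q t0)"
proof -
  define zs where "zs = (z powr q, 1::real)"
  define h where "h = \<tau> - t0"
  define ts where "ts = (\<lambda>s::real. t0 + s *\<^sub>R h)"
  define W where "W = (\<lambda>\<sigma>. Z p q \<sigma> * exp (- (zs \<bullet> \<sigma>)))"
  define a where "a = (\<lambda>\<sigma> (y::real). fst \<sigma> * (\<bar>y\<bar> powr q - z powr q) + snd \<sigma> * (\<bar>y\<bar> powr p - 1))"
  have i0: "integrable lborel (mgf_integrand p q t0)" by (rule int_t0)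
  have Eeq: "mgf_integrand p q \<sigma> y * exp (- (zs \<bullet> \<sigma>)) = exp (a \<sigma> y) * f_p p y" for \<sigma> y
  proof -
    have "fst \<sigma> * \<bar>y\<bar> powr q + snd \<sigma> * \<bar>y\<bar> powr p + - (zs \<bullet> \<sigma>) = a \<sigma> y"
      unfolding a_def zs_def by (cases \<sigma>) (simp add: algebra_simps)
    then show ?thesis unfolding mgf_integrand_def
      by (metis (no_types, lifting) exp_add mult.commute mult.left_commute)
  qed
  have alin: "a (ts s) y = (1 - s) * a t0 y + s * a \<tau> y" for s y
    unfolding a_def ts_def h_def by (simp add: algebra_simps)
  have conv: "mgf_integrand p q (ts s) y * exp (- (zs \<bullet> ts s))
        \<le> (1 - s) * (mgf_integrand p q t0 y * exp (- (zs \<bullet> t0))) + s * (mgf_integrand p q \<tau> y * exp (- (zs \<bullet> \<tau>)))"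
    if s: "0 \<le> s" "s \<le> 1" for s y
  proof -
    have "exp ((1 - s) *\<^sub>R a t0 y + s *\<^sub>R a \<tau> y) \<le> (1 - s) * exp (a t0 y) + s * exp (a \<tau> y)"
      by (rule convex_onD[OF exp_convex]) (use s in auto)
    then have "exp (a (ts s) y) \<le> (1 - s) * exp (a t0 y) + s * exp (a \<tau> y)"
      unfolding alin by simp
    then have "exp (a (ts s) y) * f_p p y \<le> ((1 - s) * exp (a t0 y) + s * exp (a \<tau> y)) * f_p p y"
      using f_p_pos[OF p0, of y] by (intro mult_right_mono) auto
    then show ?thesis unfolding Eeq by (simp add: algebra_simps)
  qed
  have iR: "integrable lborel (\<lambda>y. (1 - s) * (mgf_integrand p q t0 y * exp (- (zs \<bullet> t0))) + s * (mgf_integrand p q \<tau> y * exp (- (zs \<bullet> \<tau>))))" for s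
    using i0 i by simp
  have iS: "integrable lborel (mgf_integrand p q (ts s))" if s: "0 \<le> s" "s \<le> 1" for s
  proof -
    have iR': "integrable lborel (\<lambda>y. exp (zs \<bullet> ts s) * ((1 - s) * (mgf_integrand p q t0 y * exp (- (zs \<bullet> t0))) + s * (mgf_integrand p q \<tau> y * exp (- (zs \<bullet> \<tau>)))))"
      using iR by (intro integrable_mult_right) auto
    show ?thesis
    proof (rule Bochner_Integration.integrable_bound[OF iR' _ AE_I2])
      fix y
      have "mgf_integrand p q (ts s) y = exp (zs \<bullet> ts s) * (mgf_integrand p q (ts s) y * exp (- (zs \<bullet> ts s)))"
        by (simp add: exp_minus)
      also have "\<dots> \<le> exp (zs \<bullet> ts s) * ((1 - s) * (mgf_integrand p q t0 y * exp (- (zs \<bullet> t0))) + s * (mgf_integrand p q \<tau> y * exp (- (zs \<bullet> \<tau>))))"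
        by (intro mult_left_mono conv s) auto
      finally show "norm (mgf_integrand p q (ts s) y) \<le> norm (exp (zs \<bullet> ts s) * ((1 - s) * (mgf_integrand p q t0 y * exp (- (zs \<bullet> t0))) + s * (mgf_integrand p q \<tau> y * exp (- (zs \<bullet> \<tau>)))))"
        using mgf_pos[OF p0, of q "ts s" y] by simp
    qed simp
  qed
  have Wconv: "W (ts s) \<le> (1 - s) * W t0 + s * W \<tau>" if s: "0 \<le> s" "s \<le> 1" for s
  proof -
    have "W (ts s) = (LINT y|lborel. mgf_integrand p q (ts s) y * exp (- (zs \<bullet> ts s)))"
      unfolding W_def by simp
    also have "\<dots> \<le> (LINT y|lborel. (1 - s) * (mgf_integrand p q t0 y * exp (- (zs \<bullet> t0))) + s * (mgf_integrand p q \<tau> y * exp (- (zs \<bullet> \<tau>))))"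
      by (rule integral_mono[OF _ iR conv[OF s]]) (use iS[OF s] in simp)
    also have "\<dots> = (1 - s) * W t0 + s * W \<tau>"
      unfolding W_def using i0 i by simp
    finally show ?thesis .
  qed
  define psi where "psi = (\<lambda>s. ln (Z p q (t0 + s *\<^sub>R h)) - (zs \<bullet> t0 + s * (zs \<bullet> h)))"
  have dpsi: "(psi has_field_derivative (zs \<bullet> h - zs \<bullet> h)) (at 0 within {0<..})"
  proof -
    have lin: "((\<lambda>s. zs \<bullet> t0 + s * (zs \<bullet> h)) has_field_derivative zs \<bullet> h) (at 0 within {0<..})"
      by (auto intro!: derivative_eq_intros)
    show ?thesis unfolding psi_def using DERIV_diff[OF dir_der[of h] lin] unfolding zs_def by simp
  qed
  have "((\<lambda>s. exp (psi s)) has_field_derivative (exp (psi 0) * (zs \<bullet> h - zs \<bullet> h))) (at 0 within {0<..})"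
    by (rule DERIV_chain2[OF DERIV_exp dpsi])
  then have lim: "((\<lambda>s. (exp (psi s) - exp (psi 0)) / (s - 0)) \<longlongrightarrow> 0) (at_right 0)"
    unfolding has_field_derivative_iff by simp
  have Wpsi: "W (ts s) = exp (psi s)" if "0 \<le> s" "s \<le> 1" for s
  proof -
    have "Z p q (ts s) > 0" using Zpos[OF iS[OF that]] .
    then show ?thesis unfolding W_def psi_def ts_def
      by (simp add: exp_diff exp_minus inner_add_right field_simps exp_add)
  qed
  have "\<forall>\<^sub>F s in at_right 0. (exp (psi s) - exp (psi 0)) / (s - 0) = (W (ts s) - W (ts 0)) / s"
    by (rule eventually_at_rightI[of 0 1]) (auto simp: Wpsi)
  with lim have lim2: "((\<lambda>s. (W (ts s) - W (ts 0)) / s) \<longlongrightarrow> 0) (at_right 0)"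
    by (rule Lim_transform_eventually)
  have ev: "\<forall>\<^sub>F s in at_right 0. (W (ts s) - W (ts 0)) / s \<le> W \<tau> - W t0"
  proof (rule eventually_at_rightI[of 0 1])
    fix s :: real assume s: "s \<in> {0<..<1}"
    have "W (ts s) - W (ts 0) \<le> s * (W \<tau> - W t0)"
      using Wconv[of s] s unfolding ts_def by (simp add: algebra_simps)
    then show "(W (ts s) - W (ts 0)) / s \<le> W \<tau> - W t0"
      using s by (simp add: divide_le_eq mult.commute)
  qed simp
  have "0 \<le> W \<tau> - W t0"
    by (rule tendsto_upperbound[OF lim2 ev]) simp
  then have "W t0 \<le> W \<tau>" by simp
  moreover have "W t0 > 0" using Zpos[OF i0] by (simp add: W_def)
  ultimately have "ln (W t0) \<le> ln (W \<tau>)"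
    by (subst ln_le_cancel_iff) auto
  then show ?thesis
    using Zpos[OF i0] Zpos[OF i] unfolding W_def zs_def by (simp add: ln_mult)
qed

end


lemma Z0:
  assumes p: "p > 0" and t: "t < 1/p"
  shows "integrable lborel (mgf_integrand p q (0, t))" "Z p q (0, t) = (1 - p * t) powr (-1/p)"
proof -
  define c where "c = (1 - p * t) powr (1/p)"
  have pt: "1 - p * t > 0" using p t by (simp add: field_simps)
  have c: "c > 0" unfolding c_def using pt by simp
  have cp: "c powr p = 1 - p * t" unfolding c_def using pt p by (simp add: powr_powr)
  have e: "(fst (0::real,0::real) * c powr q, (snd (0::real,0::real) - 1/p) * c powr p + 1/p) = (0, t)"
    using cp p by (simp add: field_simps)
  have i00: "integrable lborel (mgf_integrand p q (0,0))" unfolding mgf_zero using fp_int[OF p] by simp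
  show "integrable lborel (mgf_integrand p q (0, t))"
    using mgf_scale_int(1)[OF c, of p q "(0,0)"] i00 unfolding e by simp
  have "Z p q (0, t) = Z p q (0,0) / c"
    using mgf_scale_int(2)[OF c, of p q "(0,0)"] unfolding e by simp
  also have "\<dots> = 1 / c" unfolding mgf_zero using fp_int[OF p] by simp
  also have "\<dots> = (1 - p * t) powr (-1/p)" unfolding c_def using pt by (simp add: powr_minus_divide)
  finally show "Z p q (0, t) = (1 - p * t) powr (-1/p)" .
qed

lemma ln_lt_minus_one: "0 < x \<Longrightarrow> x \<noteq> 1 \<Longrightarrow> ln x < x - (1::real)"
  using ln_le_minus_one[of x] ln_eq_minus_one[of x] by (cases "ln x = x - 1") auto

lemma Lstar_lower:
  assumes "integrable lborel (mgf_integrand p q \<tau>)"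
  shows "Lambda_star p q x \<ge> ereal (x \<bullet> \<tau> - ln (Z p q \<tau>))"
proof -
  have e: "ereal (x \<bullet> \<tau>) - Lambda_p p q \<tau> = ereal (x \<bullet> \<tau> - ln (Z p q \<tau>))"
    unfolding Lambda_p_def using assms by simp
  show ?thesis unfolding Lambda_star_def using SUP_upper[of \<tau> UNIV "\<lambda>\<tau>. ereal (x \<bullet> \<tau>) - Lambda_p p q \<tau>"] e by simp
qed

context setting begin

definition L where "L = (z powr q, 1) \<bullet> t0 - ln (Z p q t0)"

lemma Lstar_z: "Lambda_star p q (z powr q, 1) = ereal L"
proof (rule antisym)
  show "Lambda_star p q (z powr q, 1) \<le> ereal L"
    unfolding Lambda_star_def
  proof (rule SUP_least)
    fix \<tau> :: "real \<times> real"
    show "ereal ((z powr q, 1) \<bullet> \<tau>) - Lambda_p p q \<tau> \<le> ereal L"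
    proof (cases "integrable lborel (mgf_integrand p q \<tau>)")
      case True
      then show ?thesis unfolding Lambda_p_def L_def using Wineq[OF True] by simp
    next
      case False
      then show ?thesis unfolding Lambda_p_def by simp
    qed
  qed
  show "ereal L \<le> Lambda_star p q (z powr q, 1)"
    unfolding L_def by (rule Lstar_lower[OF int_t0])
qed

end


context setting begin

definition M where "M = (LINT y|lborel. \<bar>y\<bar> powr q * f_p p y)"

lemma M_lt: "M < z powr q"
proof -
  have M0: "M \<ge> 0" unfolding M_def by (intro integral_nonneg_AE AE_I2 mult_nonneg_nonneg) (auto intro: less_imp_le f_p_pos[OF p0])
  have "m_pq p q = M powr (1/q)" unfolding m_pq_def M_def by simp
  then have m0: "m_pq p q \<ge> 0" by simp
  have "m_pq p q powr q < z powr q" by (rule powr_less_mono2[OF q0 m0 zm])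
  also have "m_pq p q powr q = M" unfolding \<open>m_pq p q = M powr (1/q)\<close> using M0 q0 by (simp add: powr_powr)
  finally show ?thesis .
qed

lemma jensen_ln: "integrable lborel (mgf_integrand p q \<tau>) \<Longrightarrow> ln (Z p q \<tau>) \<ge> fst \<tau> * M + snd \<tau>"
  using jensen[OF p0 q0, of \<tau>] unfolding M_def
  by (metis exp_gt_zero exp_le_cancel_iff exp_ln less_le_trans)

lemma i00: "integrable lborel (mgf_integrand p q (0,0))" unfolding mgf_zero using fp_int[OF p0] by simp
lemma Z00: "Z p q (0,0) = 1" unfolding mgf_zero using fp_int[OF p0] by simp

lemma t1_nonneg_aux: "ln (Z p q t0) \<le> z powr q * fst t0 + snd t0"
  using Wineq[OF i00] Z00 by (cases t0) simp

lemma t1pos: "fst t0 > 0"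
proof -
  have "fst t0 * M + snd t0 \<le> z powr q * fst t0 + snd t0"
    using jensen_ln[OF int_t0] t1_nonneg_aux by linarith
  then have "fst t0 * (z powr q - M) \<ge> 0" by (simp add: algebra_simps)
  then have ge: "fst t0 \<ge> 0" using M_lt by (simp add: zero_le_mult_iff)
  show ?thesis
  proof (rule ccontr)
    assume "\<not> fst t0 > 0"
    then have f0: "fst t0 = 0" using ge by simp
    define b where "b = snd t0"
    have t0e: "t0 = (0, b)" using f0 unfolding b_def by (cases t0) simp
    have bp: "b < 1/p" using t0D unfolding D_p_def b_def by simp
    have x0: "1 - p * b > 0" using bp p0 by (simp add: field_simps)
    have "ln (Z p q t0) = - (1/p) * ln (1 - p * b)"
      unfolding t0e Z0(2)[OF p0 bp] using x0 by (simp add: ln_powr)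
    then have "- (1/p) * ln (1 - p * b) \<le> b" using t1_nonneg_aux f0 b_def by simp
    then have "ln (1 - p * b) \<ge> - p * b" using p0 by (simp add: field_simps)
    then have "1 - p * b = 1" using ln_lt_minus_one[OF x0] by (cases "1 - p * b = 1") auto
    then have "b = 0" using p0 by simp
    then have t00: "t0 = (0,0)" using t0e by simp
    have lim: "((\<lambda>s. (ln (Z p q (t0 + s *\<^sub>R (-1,0))) - ln (Z p q t0)) / s) \<longlongrightarrow> - (z powr q)) (at_right 0)"
      using dir[of "(-1,0)"] by simp
    have "\<forall>\<^sub>F s in at_right 0. (ln (Z p q (t0 + s *\<^sub>R (-1,0))) - ln (Z p q t0)) / s \<ge> - M"
    proof (rule eventually_at_rightI[of 0 1])
      fix s :: real assume s: "s \<in> {0<..<1}"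
      have e: "t0 + s *\<^sub>R (-1,0) = (-s, 0)" unfolding t00 by simp
      have i: "integrable lborel (mgf_integrand p q (-s, 0))"
        by (rule mgf_mono_integrable[OF p0 i00]) (use s in auto)
      have "ln (Z p q (-s,0)) \<ge> - (M * s)" using jensen_ln[OF i] by (simp add: mult.commute)
      then show "(ln (Z p q (t0 + s *\<^sub>R (-1,0))) - ln (Z p q t0)) / s \<ge> - M"
        unfolding e using s by (simp add: t00 Z00 le_divide_eq)
    qed simp
    then have "- M \<le> - (z powr q)" by (rule tendsto_lowerbound[OF lim]) simp
    then show False using M_lt by simp
  qed
qed

end


lemma Lstar_t2_zero:
  assumes p: "p > 0"
  shows "Lambda_star p q (t1, 0) = \<infinity>"
proof (rule ereal_top)
  fix B :: real
  define t where "t = (1 - exp (p * B)) / p"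
  have t: "t < 1/p" unfolding t_def using p by (simp add: divide_strict_right_mono)
  have e: "1 - p * t = exp (p * B)" unfolding t_def using p by simp
  have "ln (Z p q (0, t)) = - B"
    unfolding Z0(2)[OF p t] e using p by (simp add: ln_powr)
  then show "ereal B \<le> Lambda_star p q (t1, 0)"
    using Lstar_lower[OF Z0(1)[OF p t], where x="(t1, 0)" and q=q] by simp
qed

context setting begin

lemma Lstar_bound:
  assumes t2: "t2 > 0"
  shows "Lambda_star p q (t1, t2) \<ge> ereal (L + fst t0 * (t1 * t2 powr (-q/p) - z powr q) + (t2 - 1 - ln t2)/p)"
proof -
  define c where "c = t2 powr (-1/p)"
  have c: "c > 0" unfolding c_def using t2 by simp
  have cq: "c powr q = t2 powr (-q/p)" unfolding c_def using t2 by (simp add: powr_powr)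
  have "c powr p = t2 powr (-1)" unfolding c_def using t2 p0 by (simp only: powr_powr) simp
  then have cp: "c powr p = 1 / t2" using t2 by (simp add: powr_minus_divide)
  define tx where "tx = (fst t0 * c powr q, (snd t0 - 1/p) * c powr p + 1/p)"
  have ix: "integrable lborel (mgf_integrand p q tx)"
    unfolding tx_def using mgf_scale_int(1)[OF c, of p q t0] int_t0 by simp
  have Zx: "Z p q tx = Z p q t0 / c" unfolding tx_def using mgf_scale_int(2)[OF c, of p q t0] by simp
  have Z0p: "Z p q t0 > 0" by (rule Zpos[OF int_t0])
  have lnZ: "ln (Z p q tx) = ln (Z p q t0) + ln t2 / p"
    unfolding Zx c_def using Z0p t2 by (simp add: ln_div ln_powr)
  have "(t1, t2) \<bullet> tx - ln (Z p q tx) = (t1, t2) \<bullet> tx - (ln (Z p q t0) + ln t2 / p)"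
    by (simp only: lnZ)
  also have "\<dots> = L + fst t0 * (t1 * t2 powr (-q/p) - z powr q) + (t2 - 1 - ln t2)/p"
    unfolding tx_def cq cp L_def using t2 p0 by (cases t0) (simp add: field_simps)
  finally show ?thesis using Lstar_lower[OF ix, where x="(t1, t2)"] by simp
qed

end


lemma pow_ineq:
  fixes a b c p q z :: real
  assumes a: "a > 0" and b: "b > 0" and c: "c > 0" and p: "p > 0" and q: "q > 0" and z: "z \<ge> 0"
    and h: "a * b powr (1/q) * c powr (-1/p) > z"
  shows "z powr q * c powr (q/p) < b * a powr q"
proof -
  have "z powr q < (a * b powr (1/q) * c powr (-1/p)) powr q"
    by (rule powr_less_mono2[OF q z h])
  also have "\<dots> = a powr q * b * c powr (-q/p)"
    using a b c q p by (simp add: powr_mult powr_powr)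
  finally have "z powr q * c powr (q/p) < a powr q * b * c powr (-q/p) * c powr (q/p)"
    using c by (intro mult_strict_right_mono) auto
  also have "\<dots> = b * a powr q"
    using c by (simp add: powr_add[symmetric] powr_minus)
  finally show ?thesis .
qed

lemma ereal_minus_ge: "ereal a \<le> X \<Longrightarrow> ereal (a - c) \<le> X - ereal c"
  by (cases X) auto

lemma ereal_minus_gt: "ereal a < X \<Longrightarrow> ereal (a - c) < X - ereal c"
  by (cases X) auto

context setting begin

lemma z0: "z > 0"
proof -
  have "m_pq p q \<ge> 0" unfolding m_pq_def by simp
  then show ?thesis using zm by simp
qed

lemma main_ge:
  assumes t2: "t2 \<ge> 0" and h: "z powr q * \<bar>t2\<bar> powr (q/p) \<le> t1"
  shows "Lambda_star p q (t1, t2) \<ge> ereal L"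
    and "(t1, t2) \<noteq> (z powr q, 1) \<Longrightarrow> Lambda_star p q (t1, t2) > ereal L"
proof -
  have "Lambda_star p q (t1, t2) \<ge> ereal L \<and> ((t1, t2) \<noteq> (z powr q, 1) \<longrightarrow> Lambda_star p q (t1, t2) > ereal L)"
  proof (cases "t2 = 0")
    case True
    then show ?thesis using Lstar_t2_zero[OF p0] by simp
  next
    case False
    then have t2p: "t2 > 0" using t2 by simp
    define w where "w = t1 * t2 powr (-q/p)"
    have "z powr q * t2 powr (q/p) * t2 powr (-q/p) \<le> t1 * t2 powr (-q/p)"
      using h t2p by (intro mult_right_mono) auto
    moreover have e: "t2 powr (q/p) * t2 powr (-q/p) = 1" using t2p by (subst powr_add[symmetric]) simp
    ultimately have wz: "w \<ge> z powr q" unfolding w_def by (simp only: mult.assoc e mult_1_right)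
    have B: "Lambda_star p q (t1, t2) \<ge> ereal (L + fst t0 * (w - z powr q) + (t2 - 1 - ln t2)/p)"
      using Lstar_bound[OF t2p, of t1] unfolding w_def .
    have n1: "fst t0 * (w - z powr q) \<ge> 0" using t1pos wz by simp
    have n2: "(t2 - 1 - ln t2)/p \<ge> 0" using ln_le_minus_one[OF t2p] p0 by simp
    have ge: "L \<le> L + fst t0 * (w - z powr q) + (t2 - 1 - ln t2)/p" using n1 n2 by simp
    have gt: "L < L + fst t0 * (w - z powr q) + (t2 - 1 - ln t2)/p" if ne: "(t1, t2) \<noteq> (z powr q, 1)"
    proof (cases "t2 = 1")
      case True
      then have "t1 \<noteq> z powr q" using ne by simp
      moreover have "w = t1" unfolding w_def True by simp
      ultimately have "fst t0 * (w - z powr q) > 0" using t1pos wz by simp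
      then show ?thesis using n2 by simp
    next
      case False
      then have "(t2 - 1 - ln t2)/p > 0" using ln_lt_minus_one[OF t2p] p0 by simp
      then show ?thesis using n1 by simp
    qed
    show ?thesis using B ge gt by (meson ereal_less_eq(3) less_ereal.simps(1) order_less_le_trans order_trans)
  qed
  then show "Lambda_star p q (t1, t2) \<ge> ereal L"
    and "(t1, t2) \<noteq> (z powr q, 1) \<Longrightarrow> Lambda_star p q (t1, t2) > ereal L" by auto
qed

end


context setting begin

definition S1 :: "(real \<times> real) set" where
  "S1 = {x. 0 \<le> fst x \<and> 0 \<le> snd x \<and> z powr q * \<bar>snd x\<bar> powr (q/p) \<le> fst x}"

definition S2 :: "(real \<times> real \<times> real) set" where
  "S2 = {x. 0 \<le> fst x \<and> 0 \<le> fst (snd x) \<and> 0 \<le> snd (snd x) \<and> snd (snd x) \<le> 1 \<and>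
            z powr q * \<bar>fst (snd x)\<bar> powr (q/p) \<le> fst x * \<bar>snd (snd x)\<bar> powr q}"

lemma closed_S1: "closed S1"
  unfolding S1_def
  by (intro closed_Collect_conj closed_Collect_le continuous_intros continuous_on_powr') (use p0 q0 in auto)

lemma closed_S2: "closed S2"
  unfolding S2_def
  by (intro closed_Collect_conj closed_Collect_le continuous_intros continuous_on_powr') (use p0 q0 in auto)

lemma Dz_S1: "D_z p q z \<subseteq> S1"
proof
  fix x assume "x \<in> D_z p q z"
  then obtain t1 t2 where x: "x = (t1, t2)" "t1 > 0" "t2 > 0" "t1 powr (1/q) * t2 powr (-1/p) > z"
    unfolding D_z_def by auto
  have "z powr q * t2 powr (q/p) < t1 * 1 powr q"
    by (rule pow_ineq[of 1]) (use x p0 q0 z0 in auto)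
  then show "x \<in> S1" unfolding S1_def using x by auto
qed

lemma DDz_S2: "DD_z p q z \<subseteq> S2"
proof
  fix x assume "x \<in> DD_z p q z"
  then obtain t1 t2 t3 where x: "x = (t1, t2, t3)" "t1 > 0" "t2 > 0" "t3 > 0" "t3 \<le> 1" "t3 * t1 powr (1/q) * t2 powr (-1/p) > z"
    unfolding DD_z_def by auto
  have "z powr q * t2 powr (q/p) < t1 * t3 powr q"
    by (rule pow_ineq) (use x p0 q0 z0 in auto)
  then show "x \<in> S2" unfolding S2_def using x by auto
qed

lemma zs_cl: "(z powr q, 1) \<in> closure (D_z p q z)"
  unfolding closure_approachable
proof (intro allI impI)
  fix e :: real assume e: "e > 0"
  have "(z powr q) powr (1/q) < (z powr q + e/2) powr (1/q)"
    using e q0 by (intro powr_less_mono2) auto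
  then have "(z powr q + e/2, 1) \<in> D_z p q z" unfolding D_z_def using z0 q0 e
    by (simp add: powr_powr add_pos_nonneg)
  moreover have "dist (z powr q + e/2, 1::real) (z powr q, 1) < e" using e by (simp add: dist_Pair_Pair dist_real_def)
  ultimately show "\<exists>y\<in>D_z p q z. dist y (z powr q, 1) < e" by blast
qed

lemma zss_cl: "(z powr q, 1, 1) \<in> closure (DD_z p q z)"
  unfolding closure_approachable
proof (intro allI impI)
  fix e :: real assume e: "e > 0"
  have "(z powr q) powr (1/q) < (z powr q + e/2) powr (1/q)"
    using e q0 by (intro powr_less_mono2) auto
  then have "(z powr q + e/2, 1, 1) \<in> DD_z p q z" unfolding DD_z_def using z0 q0 e
    by (simp add: powr_powr add_pos_nonneg)
  moreover have "dist (z powr q + e/2, 1::real, 1::real) (z powr q, 1, 1) < e" using e by (simp add: dist_Pair_Pair dist_real_def)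
  ultimately show "\<exists>y\<in>DD_z p q z. dist y (z powr q, 1, 1) < e" by blast
qed

lemma part1: "(z powr q, 1) \<in> closure (D_z p q z)
       \<and> Lambda_star p q (z powr q, 1) = (INF x\<in>closure (D_z p q z). Lambda_star p q x)
       \<and> (\<forall>x\<in>closure (D_z p q z).
            Lambda_star p q x = (INF y\<in>closure (D_z p q z). Lambda_star p q y) \<longrightarrow> x = (z powr q, 1))"
proof -
  have sub: "closure (D_z p q z) \<subseteq> S1" by (rule closure_minimal[OF Dz_S1 closed_S1])
  have ge: "Lambda_star p q x \<ge> ereal L" if "x \<in> closure (D_z p q z)" for x
    using sub that main_ge(1)[of "snd x" "fst x"] unfolding S1_def by auto
  have gt: "Lambda_star p q x > ereal L" if "x \<in> closure (D_z p q z)" "x \<noteq> (z powr q, 1)" for x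
    using sub that main_ge(2)[of "snd x" "fst x"] unfolding S1_def by (cases x) auto
  have INF: "(INF x\<in>closure (D_z p q z). Lambda_star p q x) = ereal L"
  proof (rule antisym)
    show "(INF x\<in>closure (D_z p q z). Lambda_star p q x) \<le> ereal L"
      using INF_lower[OF zs_cl, of "Lambda_star p q"] Lstar_z by simp
    show "ereal L \<le> (INF x\<in>closure (D_z p q z). Lambda_star p q x)"
      by (rule INF_greatest) (rule ge)
  qed
  show ?thesis using zs_cl Lstar_z INF gt by (metis order_less_irrefl)
qed

lemma part2: "(z powr q, 1, 1) \<in> closure (DD_z p q z)
       \<and> I_S p q (z powr q, 1, 1) = (INF t\<in>closure (DD_z p q z). I_S p q t)
       \<and> (\<forall>t\<in>closure (DD_z p q z).
            I_S p q t = (INF s\<in>closure (DD_z p q z). I_S p q s) \<longrightarrow> t = (z powr q, 1, 1))"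
proof -
  have sub: "closure (DD_z p q z) \<subseteq> S2" by (rule closure_minimal[OF DDz_S2 closed_S2])
  have IS1: "I_S p q (z powr q, 1, 1) = ereal L" unfolding I_S_def using Lstar_z by simp
  have key: "I_S p q (t1, t2, t3) \<ge> ereal L \<and> ((t1, t2, t3) \<noteq> (z powr q, 1, 1) \<longrightarrow> I_S p q (t1, t2, t3) > ereal L)"
    if "(t1, t2, t3) \<in> S2" for t1 t2 t3
  proof (cases "t3 \<le> 0")
    case True
    then show ?thesis unfolding I_S_def by simp
  next
    case False
    then have t3: "t3 > 0" "t3 \<le> 1" using that unfolding S2_def by auto
    have t1: "t1 \<ge> 0" and t2: "t2 \<ge> 0" using that unfolding S2_def by auto
    have "z powr q * \<bar>t2\<bar> powr (q/p) \<le> t1 * t3 powr q" using that t3 unfolding S2_def by auto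
    also have "\<dots> \<le> t1 * 1" using t1 t3 q0 by (intro mult_left_mono) (auto intro: powr_le1)
    finally have h: "z powr q * \<bar>t2\<bar> powr (q/p) \<le> t1" by simp
    have IS: "I_S p q (t1, t2, t3) = Lambda_star p q (t1, t2) - ereal (ln t3)"
      unfolding I_S_def using t3 by simp
    have lnt3: "ln t3 \<le> 0" using t3 by simp
    have ge: "I_S p q (t1, t2, t3) \<ge> ereal L"
    proof -
      have "ereal (L - ln t3) \<le> I_S p q (t1, t2, t3)" unfolding IS by (rule ereal_minus_ge[OF main_ge(1)[OF t2 h]])
      moreover have "ereal L \<le> ereal (L - ln t3)" using lnt3 by simp
      ultimately show ?thesis by (rule order_trans[rotated])
    qed
    have gt: "I_S p q (t1, t2, t3) > ereal L" if ne: "(t1, t2, t3) \<noteq> (z powr q, 1, 1)"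
    proof (cases "t3 = 1")
      case True
      then have "(t1, t2) \<noteq> (z powr q, 1)" using ne by simp
      then have "Lambda_star p q (t1, t2) > ereal L" by (rule main_ge(2)[OF t2 h])
      then show ?thesis using IS True by simp
    next
      case False
      then have "ln t3 < 0" using t3 by simp
      then have "ereal L < ereal (L - ln t3)" by simp
      also have "ereal (L - ln t3) \<le> I_S p q (t1, t2, t3)" unfolding IS by (rule ereal_minus_ge[OF main_ge(1)[OF t2 h]])
      finally show ?thesis .
    qed
    show ?thesis using ge gt by blast
  qed
  have ge: "I_S p q t \<ge> ereal L" if "t \<in> closure (DD_z p q z)" for t
    using sub that key by (cases t) auto
  have gt: "I_S p q t > ereal L" if "t \<in> closure (DD_z p q z)" "t \<noteq> (z powr q, 1, 1)" for t
    using sub that key by (cases t) auto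
  have INF: "(INF t\<in>closure (DD_z p q z). I_S p q t) = ereal L"
  proof (rule antisym)
    show "(INF t\<in>closure (DD_z p q z). I_S p q t) \<le> ereal L"
      using INF_lower[OF zss_cl, of "I_S p q"] IS1 by simp
    show "ereal L \<le> (INF t\<in>closure (DD_z p q z). I_S p q t)"
      by (rule INF_greatest) (rule ge)
  qed
  show ?thesis using zss_cl IS1 INF gt by (metis order_less_irrefl)
qed

end

theorem lemma4p1:
  fixes p q z :: real
  assumes "1 \<le> q" and "q < p" and "z > m_pq p q"
    and "(z powr q, 1) \<in> J_p p q"
  shows "((z powr q, 1) \<in> closure (D_z p q z)
       \<and> Lambda_star p q (z powr q, 1) = (INF x\<in>closure (D_z p q z). Lambda_star p q x)
       \<and> (\<forall>x\<in>closure (D_z p q z).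
            Lambda_star p q x = (INF y\<in>closure (D_z p q z). Lambda_star p q y) \<longrightarrow> x = (z powr q, 1)))
     \<and> ((z powr q, 1, 1) \<in> closure (DD_z p q z)
       \<and> I_S p q (z powr q, 1, 1) = (INF t\<in>closure (DD_z p q z). I_S p q t)
       \<and> (\<forall>t\<in>closure (DD_z p q z).
            I_S p q t = (INF s\<in>closure (DD_z p q z). I_S p q s) \<longrightarrow> t = (z powr q, 1, 1)))"
proof -
  obtain t0 where t0: "t0 \<in> D_p p"
    "((\<lambda>\<sigma>. ln (LINT y|lborel. mgf_integrand p q \<sigma> y)) has_derivative (\<lambda>h. (z powr q, 1) \<bullet> h)) (at t0)"
    using assms(4) unfolding J_p_def by blast
  interpret setting p q z t0 by unfold_locales (use assms t0 in auto)
  show ?thesis using part1 part2 by blast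
qed

end
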